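(* Let $\phi:\mathbb R_{\ge0}\times X\to X$ be a continuous semiflow on a metric space $(X,d)$, let $K\subset X$ be compact and $\alpha\ge0$. Assume there is $L>0$ such that $d(\phi_t(x),\phi_t(y))\le L\,d(x,y)$ for all $x,y\in\bigcup_{s\ge0}\phi_s(K)$ and all $t\in[0,1]$. Then \[ h_{\mathrm{est}}(\alpha,K;\phi)=\ln(2)\cdot h_{\mathrm{est}}(\alpha,K;\phi_1). \]
   Context: For a continuous-time system $\phi$, a set $S\subset K$ is $(T,\varepsilon,\alpha,K)$-spanning ($T>0$ real) if for each $x\in K$ there is $y\in S$ with $d(\phi_t(x),\phi_t(y))<\varepsilon e^{-\alpha t}$ for all $t\in[0,T]$, and $h_{\mathrm{est}}(\alpha,K;\phi)=\lim_{\varepsilon\downarrow0}\limsup_{T\to\infty}\frac1T\ln s^*_{\mathrm{est}}(T,\varepsilon,\alpha,K;\phi)$, with $s^*_{\mathrm{est}}$ the minimal cardinality of such a set (natural logarithm). For the discrete-time system generated by the time-1 map $\phi_1$ (iterates $\phi_1^t=\phi_t$, $t\in\mathbb Z_{\ge0}$), the same definition is used with $T\in\mathbb Z_{>0}$, $t\in\{0,1,\ldots,T\}$, and $\log_2$ in place of $\ln$, giving $h_{\mathrm{est}}(\alpha,K;\phi_1)$. *)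

theory Defs
  imports "HOL-Analysis.Analysis"
begin

definition continuous_semiflow :: "(real \<Rightarrow> 'a::metric_space \<Rightarrow> 'a) \<Rightarrow> bool" where
  "continuous_semiflow \<phi> \<longleftrightarrow>
     (\<forall>x. \<phi> 0 x = x) \<and>
     (\<forall>s t x. 0 \<le> s \<longrightarrow> 0 \<le> t \<longrightarrow> \<phi> (s + t) x = \<phi> t (\<phi> s x)) \<and>
     continuous_on ({0..} \<times> UNIV) (\<lambda>(t, x). \<phi> t x)"

definition est_spanning_cont ::
  "(real \<Rightarrow> 'a::metric_space \<Rightarrow> 'a) \<Rightarrow> real \<Rightarrow> real \<Rightarrow> real \<Rightarrow> 'a set \<Rightarrow> 'a set \<Rightarrow> bool" where
  "est_spanning_cont \<phi> T \<epsilon> \<alpha> K S \<longleftrightarrow> S \<subseteq> K \<and>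
     (\<forall>x\<in>K. \<exists>y\<in>S. \<forall>t\<in>{0..T}. dist (\<phi> t x) (\<phi> t y) < \<epsilon> * exp (- \<alpha> * t))"

definition s_est_cont ::
  "(real \<Rightarrow> 'a::metric_space \<Rightarrow> 'a) \<Rightarrow> real \<Rightarrow> real \<Rightarrow> real \<Rightarrow> 'a set \<Rightarrow> nat" where
  "s_est_cont \<phi> T \<epsilon> \<alpha> K = Inf {card S | S. finite S \<and> est_spanning_cont \<phi> T \<epsilon> \<alpha> K S}"

definition h_est_cont :: "real \<Rightarrow> 'a set \<Rightarrow> (real \<Rightarrow> 'a::metric_space \<Rightarrow> 'a) \<Rightarrow> ereal" where
  "h_est_cont \<alpha> K \<phi> = Lim (at_right (0::real))
     (\<lambda>\<epsilon>. Limsup at_top (\<lambda>T::real. ereal ((1 / T) * ln (real (s_est_cont \<phi> T \<epsilon> \<alpha> K)))))"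

definition est_spanning_disc ::
  "('a::metric_space \<Rightarrow> 'a) \<Rightarrow> nat \<Rightarrow> real \<Rightarrow> real \<Rightarrow> 'a set \<Rightarrow> 'a set \<Rightarrow> bool" where
  "est_spanning_disc f T \<epsilon> \<alpha> K S \<longleftrightarrow> S \<subseteq> K \<and>
     (\<forall>x\<in>K. \<exists>y\<in>S. \<forall>t\<in>{0..T}. dist ((f ^^ t) x) ((f ^^ t) y) < \<epsilon> * exp (- \<alpha> * real t))"

definition s_est_disc ::
  "('a::metric_space \<Rightarrow> 'a) \<Rightarrow> nat \<Rightarrow> real \<Rightarrow> real \<Rightarrow> 'a set \<Rightarrow> nat" where
  "s_est_disc f T \<epsilon> \<alpha> K = Inf {card S | S. finite S \<and> est_spanning_disc f T \<epsilon> \<alpha> K S}"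

definition h_est_disc :: "real \<Rightarrow> 'a set \<Rightarrow> ('a::metric_space \<Rightarrow> 'a) \<Rightarrow> ereal" where
  "h_est_disc \<alpha> K f = Lim (at_right (0::real))
     (\<lambda>\<epsilon>. Limsup sequentially (\<lambda>T::nat. ereal ((1 / real T) * log 2 (real (s_est_disc f T \<epsilon> \<alpha> K)))))"

end

theory Submission imports Defs begin

lemma Limsup_compose_le:
  assumes "filterlim h G F"
  shows "Limsup F (\<lambda>x. g (h x)) \<le> Limsup G (g :: _ \<Rightarrow> 'b::complete_linorder)"
proof -
  have "Limsup F (\<lambda>x. g (h x)) \<le> Limsup (filtermap h F) g" by (rule Limsup_filtermap_ge)
  also have "\<dots> \<le> Limsup G g" using assms unfolding filterlim_def Limsup_def
    by (intro INF_superset_mono) (auto simp: le_filter_def)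
  finally show ?thesis .
qed

lemma fl1: "filterlim (\<lambda>T::real. nat \<lfloor>T\<rfloor>) sequentially at_top"
  unfolding filterlim_at_top
proof
  fix Z :: nat
  show "\<forall>\<^sub>F x in at_top. Z \<le> nat \<lfloor>x::real\<rfloor>"
    unfolding eventually_at_top_linorder by (intro exI[of _ "real Z"]) (auto simp: le_nat_floor)
qed

lemma Inf_card_mono:
  assumes "\<And>S. P S \<Longrightarrow> Q S" "\<exists>S. finite S \<and> P S"
  shows "Inf {card S|S. finite S \<and> Q S} \<le> Inf {card S|S. finite S \<and> P S}"
proof -
  have ne: "{card S|S. finite S \<and> P S} \<noteq> {}" using assms(2) by auto
  then have "Inf {card S|S. finite S \<and> P S} \<in> {card S|S. finite S \<and> P S}" by (rule Inf_nat_def1)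
  then obtain S where S: "finite S" "P S" "Inf {card S|S. finite S \<and> P S} = card S" by auto
  have "card S \<in> {card S|S. finite S \<and> Q S}" using S assms(1) by auto
  then have "Inf {card S|S. finite S \<and> Q S} \<le> card S" by (intro cInf_lower) auto
  then show ?thesis using S by simp
qed

lemma ln_nat_nonneg: "0 \<le> ln (real (n::nat))"
  by (cases "n = 0") auto

lemma ln_nat_mono: "(m::nat) \<le> n \<Longrightarrow> ln (real m) \<le> ln (real n)"
  using ln_nat_nonneg[of n] by (cases "m = 0") auto

locale estloc =
  fixes \<phi> :: "real \<Rightarrow> 'a::metric_space \<Rightarrow> 'a" and K :: "'a set" and \<alpha> L :: real
  assumes sf: "continuous_semiflow \<phi>"
    and cK: "compact K"
    and a0: "\<alpha> \<ge> 0"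
    and L0: "L > 0"
    and lip: "\<forall>x\<in>(\<Union>s\<in>{0..}. \<phi> s ` K). \<forall>y\<in>(\<Union>s\<in>{0..}. \<phi> s ` K). \<forall>t\<in>{0..1}.
           dist (\<phi> t x) (\<phi> t y) \<le> L * dist x y"
begin

lemma flow: "0 \<le> s \<Longrightarrow> 0 \<le> t \<Longrightarrow> \<phi> (s + t) x = \<phi> t (\<phi> s x)"
  using sf unfolding continuous_semiflow_def by blast

lemma iter: "(\<phi> 1 ^^ k) x = \<phi> (real k) x"
proof (induction k)
  case 0
  then show ?case using sf unfolding continuous_semiflow_def by simp
next
  case (Suc k)
  have "(\<phi> 1 ^^ Suc k) x = \<phi> 1 (\<phi> (real k) x)" using Suc by simp
  also have "\<dots> = \<phi> (real k + 1) x" using flow[of "real k" 1 x] by simp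
  finally show ?case by (simp add: add.commute)
qed

lemma cont_t: assumes "t \<ge> 0" shows "continuous_on UNIV (\<phi> t)"
proof -
  have c: "continuous_on ({0..} \<times> UNIV) (\<lambda>(t, x). \<phi> t x)"
    using sf unfolding continuous_semiflow_def by blast
  have "continuous_on UNIV ((\<lambda>(t, x). \<phi> t x) \<circ> (\<lambda>x. (t, x)))"
    apply (rule continuous_on_compose)
     apply (intro continuous_intros)
    apply (rule continuous_on_subset[OF c])
    using assms by auto
  then show ?thesis by (simp add: o_def)
qed

lemma disc_exists:
  assumes e: "\<epsilon> > 0"
  shows "\<exists>S. finite S \<and> est_spanning_disc (\<phi> 1) n \<epsilon> \<alpha> K S"
proof -
  define V where "V x = (\<Inter>k\<in>{0..n}. \<phi> (real k) -` ball (\<phi> (real k) x) (\<epsilon> * exp (- \<alpha> * real k)))" for x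
  have opV: "open (V x)" for x
    unfolding V_def
    by (intro open_INT finite_atLeastAtMost ballI open_vimage open_ball cont_t) auto
  have xV: "x \<in> V x" for x
    unfolding V_def using e by auto
  have "K \<subseteq> (\<Union>x\<in>K. V x)" using xV by auto
  from compactE_image[OF cK opV this] obtain C where C: "C \<subseteq> K" "finite C" "K \<subseteq> (\<Union>c\<in>C. V c)"
    by blast
  have "est_spanning_disc (\<phi> 1) n \<epsilon> \<alpha> K C"
    unfolding est_spanning_disc_def
  proof (intro conjI ballI)
    fix x assume "x \<in> K"
    then obtain y where y: "y \<in> C" "x \<in> V y" using C by blast
    show "\<exists>y\<in>C. \<forall>t\<in>{0..n}. dist ((\<phi> 1 ^^ t) x) ((\<phi> 1 ^^ t) y) < \<epsilon> * exp (- \<alpha> * real t)"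
    proof (intro bexI[OF _ y(1)] ballI)
      fix t assume "t \<in> {0..n}"
      then show "dist ((\<phi> 1 ^^ t) x) ((\<phi> 1 ^^ t) y) < \<epsilon> * exp (- \<alpha> * real t)"
        using y(2) by (auto simp: V_def iter dist_commute)
    qed
  qed (use C in auto)
  then show ?thesis using C by blast
qed

lemma cont_to_disc:
  assumes "est_spanning_cont \<phi> T \<epsilon> \<alpha> K S" "real n \<le> T"
  shows "est_spanning_disc (\<phi> 1) n \<epsilon> \<alpha> K S"
  using assms unfolding est_spanning_cont_def est_spanning_disc_def
  by (fastforce simp: iter)

lemma disc_to_cont:
  assumes sp: "est_spanning_disc (\<phi> 1) (nat \<lfloor>T\<rfloor>) \<epsilon> \<alpha> K S" and T0: "0 \<le> T"
  shows "est_spanning_cont \<phi> T (L * exp \<alpha> * \<epsilon>) \<alpha> K S"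
  unfolding est_spanning_cont_def
proof (intro conjI ballI)
  show "S \<subseteq> K" using sp unfolding est_spanning_disc_def by blast
  fix x assume xK: "x \<in> K"
  then obtain y where y: "y \<in> S"
    "\<forall>t\<in>{0..nat \<lfloor>T\<rfloor>}. dist ((\<phi> 1 ^^ t) x) ((\<phi> 1 ^^ t) y) < \<epsilon> * exp (- \<alpha> * real t)"
    using sp unfolding est_spanning_disc_def by blast
  have yK: "y \<in> K" using sp y(1) unfolding est_spanning_disc_def by blast
  show "\<exists>y\<in>S. \<forall>t\<in>{0..T}. dist (\<phi> t x) (\<phi> t y) < L * exp \<alpha> * \<epsilon> * exp (- \<alpha> * t)"
  proof (intro bexI[OF _ y(1)] ballI)
    fix t assume t: "t \<in> {0..T}"
    define k where "k = nat \<lfloor>t\<rfloor>"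
    have k1: "real k \<le> t" "t < real k + 1" using t unfolding k_def by auto
    have kT: "k \<in> {0..nat \<lfloor>T\<rfloor>}" using t unfolding k_def by (auto intro: nat_mono floor_mono)
    have d: "dist (\<phi> (real k) x) (\<phi> (real k) y) < \<epsilon> * exp (- \<alpha> * real k)"
      using y(2) kT by (simp add: iter)
    have eq: "\<phi> t z = \<phi> (t - real k) (\<phi> (real k) z)" for z
      using flow[of "real k" "t - real k" z] k1 by simp
    have orb: "\<phi> (real k) z \<in> (\<Union>s\<in>{0..}. \<phi> s ` K)" if "z \<in> K" for z
      using that by auto
    have "dist (\<phi> t x) (\<phi> t y) \<le> L * dist (\<phi> (real k) x) (\<phi> (real k) y)"
      unfolding eq[of x] eq[of y]
      using lip orb[OF xK] orb[OF yK] k1 by auto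
    also have "\<dots> < L * (\<epsilon> * exp (- \<alpha> * real k))"
      using d L0 by simp
    also have "exp (- \<alpha> * real k) \<le> exp \<alpha> * exp (- \<alpha> * t)"
    proof -
      have "- \<alpha> * real k \<le> \<alpha> + - \<alpha> * t"
        using a0 k1 mult_left_mono[of "t - real k" 1 \<alpha>] by (simp add: algebra_simps)
      then show ?thesis by (simp add: exp_add[symmetric])
    qed
    then have "L * (\<epsilon> * exp (- \<alpha> * real k)) \<le> L * (\<epsilon> * (exp \<alpha> * exp (- \<alpha> * t)))"
    proof -
      have "0 < \<epsilon> * exp (- \<alpha> * real k)" by (rule le_less_trans[OF zero_le_dist d])
      then have "0 < \<epsilon>" by (simp add: zero_less_mult_iff)
      then show ?thesis using L0 \<open>exp (- \<alpha> * real k) \<le> exp \<alpha> * exp (- \<alpha> * t)\<close>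
        by (intro mult_left_mono) auto
    qed
    finally show "dist (\<phi> t x) (\<phi> t y) < L * exp \<alpha> * \<epsilon> * exp (- \<alpha> * t)"
      by (simp add: algebra_simps)
  qed
qed

lemma C0: "L * exp \<alpha> > 0" using L0 by simp

lemma s_disc_le_cont:
  assumes e: "\<epsilon> > 0" and nT: "real n \<le> T"
  shows "s_est_disc (\<phi> 1) n \<epsilon> \<alpha> K \<le> s_est_cont \<phi> T \<epsilon> \<alpha> K"
proof -
  have T0: "0 \<le> T" using nT by (meson of_nat_0_le_iff order.trans)
  have e': "\<epsilon> / (L * exp \<alpha>) > 0" using e C0 by simp
  obtain S where "finite S" "est_spanning_disc (\<phi> 1) (nat \<lfloor>T\<rfloor>) (\<epsilon> / (L * exp \<alpha>)) \<alpha> K S"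
    using disc_exists[OF e'] by blast
  moreover from this(2) have "est_spanning_cont \<phi> T (L * exp \<alpha> * (\<epsilon> / (L * exp \<alpha>))) \<alpha> K S"
    by (rule disc_to_cont[OF _ T0])
  ultimately have "finite S \<and> est_spanning_cont \<phi> T \<epsilon> \<alpha> K S"
    using C0 L0 by simp
  then show ?thesis unfolding s_est_disc_def s_est_cont_def
    by (intro Inf_card_mono cont_to_disc[OF _ nT]) auto
qed

lemma s_cont_le_disc:
  assumes e: "\<epsilon> > 0" and T0: "0 \<le> T"
  shows "s_est_cont \<phi> T (L * exp \<alpha> * \<epsilon>) \<alpha> K \<le> s_est_disc (\<phi> 1) (nat \<lfloor>T\<rfloor>) \<epsilon> \<alpha> K"
  unfolding s_est_disc_def s_est_cont_def
  by (intro Inf_card_mono disc_to_cont[OF _ T0] disc_exists[OF e])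

lemma s_disc_anti:
  assumes e: "0 < \<epsilon>1" "\<epsilon>1 \<le> \<epsilon>2"
  shows "s_est_disc (\<phi> 1) n \<epsilon>2 \<alpha> K \<le> s_est_disc (\<phi> 1) n \<epsilon>1 \<alpha> K"
  unfolding s_est_disc_def
proof (intro Inf_card_mono disc_exists[OF e(1)])
  fix S assume "est_spanning_disc (\<phi> 1) n \<epsilon>1 \<alpha> K S"
  then show "est_spanning_disc (\<phi> 1) n \<epsilon>2 \<alpha> K S"
    unfolding est_spanning_disc_def
    using e by (fastforce intro: order.strict_trans2 mult_right_mono)
qed


lemma log2_nat_mono: "(m::nat) \<le> n \<Longrightarrow> log 2 (real m) \<le> log 2 (real n)"
  by (simp add: log_def divide_right_mono ln_nat_mono)

lemma ln2_log2: "ln 2 * (c * log 2 x) = c * ln x"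
  by (simp add: log_def)

lemma B_le_a:
  assumes e: "\<epsilon> > 0"
  shows "ereal (ln 2) * Limsup sequentially (\<lambda>T::nat. ereal ((1 / real T) * log 2 (real (s_est_disc (\<phi> 1) T \<epsilon> \<alpha> K))))
    \<le> Limsup at_top (\<lambda>T::real. ereal ((1 / T) * ln (real (s_est_cont \<phi> T \<epsilon> \<alpha> K))))"
proof -
  have "ereal (ln 2) * Limsup sequentially (\<lambda>T::nat. ereal ((1 / real T) * log 2 (real (s_est_disc (\<phi> 1) T \<epsilon> \<alpha> K))))
    = Limsup sequentially (\<lambda>T::nat. ereal (ln 2) * ereal ((1 / real T) * log 2 (real (s_est_disc (\<phi> 1) T \<epsilon> \<alpha> K))))"
    by (rule Limsup_ereal_mult_left[symmetric]) auto
  also have "\<dots> \<le> Limsup sequentially (\<lambda>T::nat. ereal ((1 / real T) * ln (real (s_est_cont \<phi> (real T) \<epsilon> \<alpha> K))))"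
  proof (intro Limsup_mono always_eventually allI)
    fix n :: nat
    have "1 / real n * ln (real (s_est_disc (\<phi> 1) n \<epsilon> \<alpha> K)) \<le> 1 / real n * ln (real (s_est_cont \<phi> (real n) \<epsilon> \<alpha> K))"
      by (intro mult_left_mono ln_nat_mono s_disc_le_cont e) auto
    then show "ereal (ln 2) * ereal ((1 / real n) * log 2 (real (s_est_disc (\<phi> 1) n \<epsilon> \<alpha> K)))
      \<le> ereal ((1 / real n) * ln (real (s_est_cont \<phi> (real n) \<epsilon> \<alpha> K)))"
      by (simp only: times_ereal.simps ln2_log2) simp
  qed
  also have "\<dots> \<le> Limsup at_top (\<lambda>T::real. ereal ((1 / T) * ln (real (s_est_cont \<phi> T \<epsilon> \<alpha> K))))"
    by (rule Limsup_compose_le[OF filterlim_real_sequentially])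
  finally show ?thesis .
qed

lemma a_le_B:
  assumes e: "\<epsilon> > 0"
  shows "Limsup at_top (\<lambda>T::real. ereal ((1 / T) * ln (real (s_est_cont \<phi> T (L * exp \<alpha> * \<epsilon>) \<alpha> K))))
    \<le> ereal (ln 2) * Limsup sequentially (\<lambda>T::nat. ereal ((1 / real T) * log 2 (real (s_est_disc (\<phi> 1) T \<epsilon> \<alpha> K))))"
proof -
  have "Limsup at_top (\<lambda>T::real. ereal ((1 / T) * ln (real (s_est_cont \<phi> T (L * exp \<alpha> * \<epsilon>) \<alpha> K))))
    \<le> Limsup at_top (\<lambda>T::real. ereal (ln 2) * ereal ((1 / real (nat \<lfloor>T\<rfloor>)) * log 2 (real (s_est_disc (\<phi> 1) (nat \<lfloor>T\<rfloor>) \<epsilon> \<alpha> K))))"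
  proof (intro Limsup_mono eventually_mono[OF eventually_ge_at_top[of 1]])
    fix T :: real assume T1: "1 \<le> T"
    define n where "n = nat \<lfloor>T\<rfloor>"
    have n1: "1 \<le> real n" "real n \<le> T" using T1 unfolding n_def by (auto simp: le_nat_floor)
    have "1 / T * ln (real (s_est_cont \<phi> T (L * exp \<alpha> * \<epsilon>) \<alpha> K)) \<le> 1 / T * ln (real (s_est_disc (\<phi> 1) n \<epsilon> \<alpha> K))"
      unfolding n_def using T1 by (intro mult_left_mono ln_nat_mono s_cont_le_disc e) auto
    also have "\<dots> \<le> 1 / real n * ln (real (s_est_disc (\<phi> 1) n \<epsilon> \<alpha> K))"
      using n1 by (intro mult_right_mono ln_nat_nonneg divide_left_mono) auto
    finally have "1 / T * ln (real (s_est_cont \<phi> T (L * exp \<alpha> * \<epsilon>) \<alpha> K)) \<le> ln 2 * (1 / real n * log 2 (real (s_est_disc (\<phi> 1) n \<epsilon> \<alpha> K)))"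
      by (simp only: ln2_log2)
    then show "ereal ((1 / T) * ln (real (s_est_cont \<phi> T (L * exp \<alpha> * \<epsilon>) \<alpha> K)))
      \<le> ereal (ln 2) * ereal ((1 / real (nat \<lfloor>T\<rfloor>)) * log 2 (real (s_est_disc (\<phi> 1) (nat \<lfloor>T\<rfloor>) \<epsilon> \<alpha> K)))"
      unfolding n_def by simp
  qed
  also have "\<dots> \<le> Limsup sequentially (\<lambda>T::nat. ereal (ln 2) * ereal ((1 / real T) * log 2 (real (s_est_disc (\<phi> 1) T \<epsilon> \<alpha> K))))"
    by (rule Limsup_compose_le[OF fl1])
  also have "\<dots> = ereal (ln 2) * Limsup sequentially (\<lambda>T::nat. ereal ((1 / real T) * log 2 (real (s_est_disc (\<phi> 1) T \<epsilon> \<alpha> K))))"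
    by (rule Limsup_ereal_mult_left) auto
  finally show ?thesis .
qed

lemma b_anti:
  assumes "0 < \<epsilon>1" "\<epsilon>1 \<le> \<epsilon>2"
  shows "Limsup sequentially (\<lambda>T::nat. ereal ((1 / real T) * log 2 (real (s_est_disc (\<phi> 1) T \<epsilon>2 \<alpha> K))))
    \<le> Limsup sequentially (\<lambda>T::nat. ereal ((1 / real T) * log 2 (real (s_est_disc (\<phi> 1) T \<epsilon>1 \<alpha> K))))"
  by (intro Limsup_mono always_eventually allI ereal_less_eq(3)[THEN iffD2] mult_left_mono log2_nat_mono s_disc_anti assms) auto

end

theorem mainTheorem3:
  fixes \<phi> :: "real \<Rightarrow> 'a::metric_space \<Rightarrow> 'a" and K :: "'a set" and \<alpha> L :: real
  assumes "continuous_semiflow \<phi>"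
    and "compact K"
    and "\<alpha> \<ge> 0"
    and "L > 0"
    and "\<forall>x\<in>(\<Union>s\<in>{0..}. \<phi> s ` K). \<forall>y\<in>(\<Union>s\<in>{0..}. \<phi> s ` K). \<forall>t\<in>{0..1}.
           dist (\<phi> t x) (\<phi> t y) \<le> L * dist x y"
  shows "h_est_cont \<alpha> K \<phi> = ereal (ln 2) * h_est_disc \<alpha> K (\<phi> 1)"
proof -
  interpret E: estloc \<phi> K \<alpha> L using assms by unfold_locales
  define b where "b \<epsilon> = Limsup sequentially (\<lambda>T::nat. ereal ((1 / real T) * log 2 (real (s_est_disc (\<phi> 1) T \<epsilon> \<alpha> K))))" for \<epsilon>
  define a where "a \<epsilon> = Limsup at_top (\<lambda>T::real. ereal ((1 / T) * ln (real (s_est_cont \<phi> T \<epsilon> \<alpha> K))))" for \<epsilon>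
  define l where "l = (SUP \<epsilon>\<in>{0<..}. b \<epsilon>)"
  define C where "C = L * exp \<alpha>"
  have C0: "C > 0" unfolding C_def using E.C0 .
  have pos: "eventually (\<lambda>\<epsilon>::real. 0 < \<epsilon>) (at_right 0)"
    by (auto simp: eventually_at_filter)
  have bl: "(b \<longlongrightarrow> l) (at_right 0)"
  proof (rule order_tendstoI)
    fix y assume "y < l"
    then obtain \<epsilon>0 where e0: "0 < \<epsilon>0" "y < b \<epsilon>0" by (auto simp: l_def less_SUP_iff)
    show "eventually (\<lambda>\<epsilon>. y < b \<epsilon>) (at_right 0)"
      unfolding eventually_at_right_field
    proof (intro exI[of _ \<epsilon>0] conjI allI impI)
      fix \<epsilon> :: real assume "0 < \<epsilon>" "\<epsilon> < \<epsilon>0"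
      then have "b \<epsilon>0 \<le> b \<epsilon>" unfolding b_def by (intro E.b_anti) auto
      then show "y < b \<epsilon>" using e0 by simp
    qed (use e0 in auto)
  next
    fix y assume "l < y"
    show "eventually (\<lambda>\<epsilon>. b \<epsilon> < y) (at_right 0)"
      using pos
    proof (rule eventually_mono)
      fix \<epsilon> :: real assume "0 < \<epsilon>"
      then have "b \<epsilon> \<le> l" unfolding l_def by (intro SUP_upper) auto
      then show "b \<epsilon> < y" using \<open>l < y\<close> by simp
    qed
  qed
  have Bl: "((\<lambda>\<epsilon>. ereal (ln 2) * b \<epsilon>) \<longlongrightarrow> ereal (ln 2) * l) (at_right 0)"
    by (intro tendsto_cmult_ereal bl) simp
  have fC: "filterlim (\<lambda>\<epsilon>::real. \<epsilon> / C) (at_right 0) (at_right 0)"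
    unfolding filterlim_at
  proof
    show "\<forall>\<^sub>F x in at_right 0. x / C \<in> {0<..} \<and> x / C \<noteq> 0"
      using pos by (rule eventually_mono) (use C0 in auto)
    have "((\<lambda>\<epsilon>::real. \<epsilon> / C) \<longlongrightarrow> 0 / C) (at_right 0)"
      by (intro tendsto_divide tendsto_ident_at tendsto_const) (use C0 in auto)
    then show "((\<lambda>\<epsilon>::real. \<epsilon> / C) \<longlongrightarrow> 0) (at_right 0)" by simp
  qed
  have Bl2: "((\<lambda>\<epsilon>. ereal (ln 2) * b (\<epsilon> / C)) \<longlongrightarrow> ereal (ln 2) * l) (at_right 0)"
    using filterlim_compose[OF Bl fC] by simp
  have al: "(a \<longlongrightarrow> ereal (ln 2) * l) (at_right 0)"
  proof (rule tendsto_sandwich[OF _ _ Bl Bl2])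
    show "\<forall>\<^sub>F n in at_right 0. ereal (ln 2) * b n \<le> a n"
      using pos by (rule eventually_mono) (unfold a_def b_def, rule E.B_le_a)
    show "\<forall>\<^sub>F n in at_right 0. a n \<le> ereal (ln 2) * b (n / C)"
      using pos
    proof (rule eventually_mono)
      fix \<epsilon> :: real assume e: "0 < \<epsilon>"
      have "a (L * exp \<alpha> * (\<epsilon> / C)) \<le> ereal (ln 2) * b (\<epsilon> / C)"
        unfolding a_def b_def by (rule E.a_le_B) (use e C0 in auto)
      moreover have "L * exp \<alpha> * (\<epsilon> / C) = \<epsilon>" using C0 unfolding C_def by auto
      ultimately show "a \<epsilon> \<le> ereal (ln 2) * b (\<epsilon> / C)" by simp
    qed
  qed
  have "h_est_cont \<alpha> K \<phi> = Lim (at_right 0) a" unfolding h_est_cont_def a_def ..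
  also have "\<dots> = ereal (ln 2) * l" by (rule tendsto_Lim[OF _ al]) simp
  also have "l = Lim (at_right 0) b" by (rule tendsto_Lim[OF _ bl, symmetric]) simp
  also have "Lim (at_right 0) b = h_est_disc \<alpha> K (\<phi> 1)" unfolding h_est_disc_def b_def ..
  finally show ?thesis .
qed

end
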